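(* For every graph $G$ and every distension $\widehat{G}$ of $G$, we have $\operatorname{tw}(\widehat{G})\leq\max\{\operatorname{tw}(G),3\}$ and $\operatorname{pw}(\widehat{G})\leq\operatorname{pw}(G)+2$.
   Context: All graphs are finite, simple and undirected. $\operatorname{tw}$ and $\operatorname{pw}$ denote treewidth and pathwidth. A distension of a graph $G$ is any graph $\widehat{G}$ obtained from $G$ by adding, for each edge $vw\in E(G)$, a new path $P_{vw}$ (with at least one vertex) each of whose vertices is adjacent to both $v$ and $w$, where the paths $P_{vw}$ are vertex-disjoint from $G$ and pairwise vertex-disjoint for distinct edges, and no other edges are added. *)

theory Defs
  imports Main
begin

definition graph :: "'a set \<Rightarrow> 'a set set \<Rightarrow> bool" where
  "graph V E \<longleftrightarrow> finite V \<and> (\<forall>e\<in>E. \<exists>u v. e = {u, v} \<and> u \<noteq> v \<and> u \<in> V \<and> v \<in> V)"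

definition connected_in :: "'a set set \<Rightarrow> 'a set \<Rightarrow> bool" where
  "connected_in E S \<longleftrightarrow>
     (\<forall>u\<in>S. \<forall>v\<in>S. (u, v) \<in> {(x, y). {x, y} \<in> E \<and> x \<in> S \<and> y \<in> S}\<^sup>*)"

definition is_cycle :: "'a set set \<Rightarrow> 'a list \<Rightarrow> bool" where
  "is_cycle E xs \<longleftrightarrow> length xs \<ge> 3 \<and> distinct xs \<and>
     (\<forall>i < length xs. {xs ! i, xs ! ((i + 1) mod length xs)} \<in> E)"

definition tree :: "'a set \<Rightarrow> 'a set set \<Rightarrow> bool" where
  "tree V E \<longleftrightarrow> graph V E \<and> V \<noteq> {} \<and> connected_in E V \<and> \<not> (\<exists>xs. is_cycle E xs)"

definition tree_decomposition ::
  "'a set \<Rightarrow> 'a set set \<Rightarrow> nat set \<Rightarrow> nat set set \<Rightarrow> (nat \<Rightarrow> 'a set) \<Rightarrow> bool" where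
  "tree_decomposition V E I F \<beta> \<longleftrightarrow>
     tree I F \<and> (\<forall>i\<in>I. \<beta> i \<subseteq> V) \<and>
     (\<forall>v\<in>V. \<exists>i\<in>I. v \<in> \<beta> i) \<and>
     (\<forall>e\<in>E. \<exists>i\<in>I. e \<subseteq> \<beta> i) \<and>
     (\<forall>v\<in>V. connected_in F {i \<in> I. v \<in> \<beta> i})"

definition td_width :: "nat set \<Rightarrow> (nat \<Rightarrow> 'a set) \<Rightarrow> int" where
  "td_width I \<beta> = Max ((\<lambda>i. int (card (\<beta> i)) - 1) ` I)"

definition treewidth :: "'a set \<Rightarrow> 'a set set \<Rightarrow> int" where
  "treewidth V E = (LEAST k. \<exists>I F \<beta>. tree_decomposition V E I F \<beta> \<and> td_width I \<beta> = k)"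

definition path_decomposition :: "'a set \<Rightarrow> 'a set set \<Rightarrow> 'a set list \<Rightarrow> bool" where
  "path_decomposition V E Bs \<longleftrightarrow>
     Bs \<noteq> [] \<and> (\<forall>B\<in>set Bs. B \<subseteq> V) \<and>
     (\<forall>v\<in>V. \<exists>B\<in>set Bs. v \<in> B) \<and>
     (\<forall>e\<in>E. \<exists>B\<in>set Bs. e \<subseteq> B) \<and>
     (\<forall>i j k. i \<le> j \<and> j \<le> k \<and> k < length Bs \<longrightarrow> Bs ! i \<inter> Bs ! k \<subseteq> Bs ! j)"

definition pd_width :: "'a set list \<Rightarrow> int" where
  "pd_width Bs = Max ((\<lambda>B. int (card B) - 1) ` set Bs)"

definition pathwidth :: "'a set \<Rightarrow> 'a set set \<Rightarrow> int" where
  "pathwidth V E = (LEAST k. \<exists>Bs. path_decomposition V E Bs \<and> pd_width Bs = k)"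

text \<open>(V', E') is a distension of (V, E): for each edge e a new path P e (nonempty list of
  distinct new vertices), pairwise disjoint, each vertex adjacent to both ends of e.\<close>
definition distension :: "'a set \<Rightarrow> 'a set set \<Rightarrow> 'a set \<Rightarrow> 'a set set \<Rightarrow> bool" where
  "distension V E V' E' \<longleftrightarrow> (\<exists>P :: 'a set \<Rightarrow> 'a list.
     (\<forall>e\<in>E. P e \<noteq> [] \<and> distinct (P e) \<and> set (P e) \<inter> V = {}) \<and>
     (\<forall>e\<in>E. \<forall>e'\<in>E. e \<noteq> e' \<longrightarrow> set (P e) \<inter> set (P e') = {}) \<and>
     V' = V \<union> (\<Union>e\<in>E. set (P e)) \<and>
     E' = E \<union> (\<Union>e\<in>E. {{P e ! i, P e ! Suc i} | i. Suc i < length (P e)}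
                    \<union> {{x, v} | x v. x \<in> set (P e) \<and> v \<in> e}))"

end

theory Submission
  imports Defs
begin


lemma int_least:
  fixes P :: "int \<Rightarrow> bool"
  assumes "P k0" "\<And>k. P k \<Longrightarrow> b \<le> k"
  shows "P (LEAST k. P k) \<and> (\<forall>k. P k \<longrightarrow> (LEAST k. P k) \<le> k)"
proof -
  define n where "n = (LEAST n::nat. P (b + int n))"
  have k0: "P (b + int (nat (k0 - b)))" using assms by simp
  have Pn: "P (b + int n)" unfolding n_def by (rule LeastI[of "\<lambda>n. P (b + int n)", OF k0])
  have le: "b + int n \<le> k" if "P k" for k
  proof -
    have "k = b + int (nat (k - b))" using assms(2)[OF that] by simp
    hence "P (b + int (nat (k - b)))" using that by simp
    hence "n \<le> nat (k - b)" unfolding n_def by (rule Least_le)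
    thus ?thesis using assms(2)[OF that] by linarith
  qed
  have "(LEAST k. P k) = b + int n"
    by (rule Least_equality) (use Pn le in auto)
  thus ?thesis using Pn le by auto
qed

lemma connected_in_mono:
  assumes "connected_in E S" "E \<subseteq> E'" shows "connected_in E' S"
proof -
  have "{(x, y). {x, y} \<in> E \<and> x \<in> S \<and> y \<in> S} \<subseteq> {(x, y). {x, y} \<in> E' \<and> x \<in> S \<and> y \<in> S}"
    using assms(2) by auto
  from rtrancl_mono[OF this] assms(1) show ?thesis unfolding connected_in_def by blast
qed

lemma connected_in_single: "connected_in E {x}"
  unfolding connected_in_def by auto

lemma connected_in_insert:
  assumes "connected_in E S" "y \<in> S" "{x, y} \<in> E'" "E \<subseteq> E'"
  shows "connected_in E' (insert x S)"
proof -
  let ?R = "{(a, b). {a, b} \<in> E \<and> a \<in> S \<and> b \<in> S}"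
  let ?R' = "{(a, b). {a, b} \<in> E' \<and> a \<in> insert x S \<and> b \<in> insert x S}"
  have "?R \<subseteq> ?R'" using assms(4) by auto
  hence sub: "?R\<^sup>* \<subseteq> ?R'\<^sup>*" by (rule rtrancl_mono)
  have xy: "(x, y) \<in> ?R'" and yx: "(y, x) \<in> ?R'" using assms(2,3) by (auto simp: insert_commute)
  show ?thesis unfolding connected_in_def
  proof (intro ballI)
    fix u v assume u: "u \<in> insert x S" and v: "v \<in> insert x S"
    show "(u, v) \<in> ?R'\<^sup>*"
    proof (cases "u = x")
      case True
      show ?thesis
      proof (cases "v = x")
        case True thus ?thesis using \<open>u = x\<close> by simp
      next
        case False
        hence "(y, v) \<in> ?R'\<^sup>*" using v assms(1,2) sub unfolding connected_in_def by blast
        thus ?thesis using xy True by (meson converse_rtrancl_into_rtrancl)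
      qed
    next
      case False
      hence uS: "u \<in> S" using u by simp
      show ?thesis
      proof (cases "v = x")
        case True
        have "(u, y) \<in> ?R'\<^sup>*" using uS assms(1,2) sub unfolding connected_in_def by blast
        thus ?thesis using yx True by (meson rtrancl_into_rtrancl)
      next
        case False
        thus ?thesis using uS v assms(1) sub unfolding connected_in_def by blast
      qed
    qed
  qed
qed

lemma tree_add_leaf:
  assumes T: "tree I T" and i: "i \<in> I" and j: "j \<notin> I"
  shows "tree (insert j I) (insert {i, j} T)"
proof -
  have g: "graph I T" and ne: "I \<noteq> {}" and c: "connected_in T I" and nc: "\<not> (\<exists>xs. is_cycle T xs)"
    using T unfolding tree_def by auto
  have ij: "i \<noteq> j" using i j by auto
  have g': "graph (insert j I) (insert {i, j} T)"
    unfolding graph_def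
  proof (intro conjI ballI)
    show "finite (insert j I)" using g unfolding graph_def by simp
  next
    fix e assume "e \<in> insert {i, j} T"
    then consider "e = {i, j}" | "e \<in> T" by blast
    thus "\<exists>u v. e = {u, v} \<and> u \<noteq> v \<and> u \<in> insert j I \<and> v \<in> insert j I"
    proof cases
      case 1 thus ?thesis using i ij by blast
    next
      case 2 then obtain u v where "e = {u, v}" "u \<noteq> v" "u \<in> I" "v \<in> I"
        using g unfolding graph_def by blast
      thus ?thesis by blast
    qed
  qed
  have c': "connected_in (insert {i, j} T) (insert j I)"
    by (rule connected_in_insert[OF c i]) (auto simp: insert_commute)
  have jT: "\<forall>f\<in>T. j \<notin> f"
  proof
    fix f assume "f \<in> T"
    then obtain u v where "f = {u, v}" "u \<in> I" "v \<in> I" using g unfolding graph_def by blast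
    thus "j \<notin> f" using j by auto
  qed
  have nc': "\<not> is_cycle (insert {i, j} T) xs" for xs
  proof
    assume cyc: "is_cycle (insert {i, j} T) xs"
    let ?n = "length xs"
    have len: "?n \<ge> 3" and dist: "distinct xs"
      and ed: "\<And>k. k < ?n \<Longrightarrow> {xs ! k, xs ! ((k + 1) mod ?n)} \<in> insert {i, j} T"
      using cyc unfolding is_cycle_def by auto
    show False
    proof (cases "j \<in> set xs")
      case False
      have "is_cycle T xs" unfolding is_cycle_def
      proof (intro conjI allI impI)
        fix k assume k: "k < ?n"
        have "xs ! k \<in> set xs" using k by simp
        hence "xs ! k \<noteq> j" using False by auto
        moreover have "xs ! ((k + 1) mod ?n) \<in> set xs" using k by (intro nth_mem) (metis gr_implies_not0 mod_less_divisor not_gr_zero)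
        hence "xs ! ((k + 1) mod ?n) \<noteq> j" using False by auto
        ultimately show "{xs ! k, xs ! ((k + 1) mod ?n)} \<in> T" using ed[OF k] by (auto simp: doubleton_eq_iff)
      qed (use len dist in auto)
      thus False using nc by blast
    next
      case True
      then obtain k where k: "k < ?n" and xk: "xs ! k = j" by (auto simp: in_set_conv_nth)
      define k1 where "k1 = (k + 1) mod ?n"
      define k0 where "k0 = (if k = 0 then ?n - 1 else k - 1)"
      have k1n: "k1 < ?n" unfolding k1_def using len by (metis gr_implies_not0 mod_less_divisor not_gr_zero not_numeral_le_zero)
      have k0n: "k0 < ?n" unfolding k0_def using len k by auto
      have k0k: "(k0 + 1) mod ?n = k" unfolding k0_def using len k by auto
      have e1: "{j, xs ! k1} \<in> insert {i, j} T" using ed[OF k] xk k1_def by simp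
      have e0: "{xs ! k0, j} \<in> insert {i, j} T" using ed[OF k0n] xk k0k by simp
      have "{j, xs ! k1} = {i, j}" using e1 jT by auto
      hence a1: "xs ! k1 = i" using ij by (auto simp: doubleton_eq_iff)
      have "{xs ! k0, j} = {i, j}" using e0 jT by auto
      hence a0: "xs ! k0 = i" using ij by (auto simp: doubleton_eq_iff)
      have "k0 \<noteq> k1" unfolding k0_def k1_def using len k
        by (cases "k = 0"; cases "k + 1 = ?n") auto
      thus False using a0 a1 dist k0n k1n by (metis nth_eq_iff_index_eq)
    qed
  qed
  show ?thesis unfolding tree_def using g' c' nc' by auto
qed




lemma td_leaf:
  assumes td: "tree_decomposition W F I T \<beta>" and i: "i \<in> I" and j: "j \<notin> I"
    and Bi: "B \<inter> W \<subseteq> \<beta> i" and F': "\<forall>f\<in>F'. f \<in> F \<or> f \<subseteq> B"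
  shows "tree_decomposition (W \<union> B) F' (insert j I) (insert {i, j} T) (\<beta>(j := B))"
proof -
  have T: "tree I T" and bW: "\<forall>i\<in>I. \<beta> i \<subseteq> W" and cov: "\<forall>v\<in>W. \<exists>i\<in>I. v \<in> \<beta> i"
    and ecov: "\<forall>e\<in>F. \<exists>i\<in>I. e \<subseteq> \<beta> i" and con: "\<forall>v\<in>W. connected_in T {i \<in> I. v \<in> \<beta> i}"
    using td unfolding tree_decomposition_def by auto
  let ?\<beta> = "\<beta>(j := B)"
  have bI: "?\<beta> k = \<beta> k" if "k \<in> I" for k using that j by auto
  have con': "connected_in (insert {i, j} T) {k \<in> insert j I. v \<in> ?\<beta> k}" if v: "v \<in> W \<union> B" for v
  proof (cases "v \<in> W")
    case True
    show ?thesis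
    proof (cases "v \<in> B")
      case True
      have eq: "{k \<in> insert j I. v \<in> ?\<beta> k} = insert j {k \<in> I. v \<in> \<beta> k}" using True bI by auto
      have "i \<in> {k \<in> I. v \<in> \<beta> k}" using i Bi True \<open>v \<in> W\<close> by auto
      from connected_in_insert[OF con[rule_format, OF \<open>v \<in> W\<close>] this, of j "insert {i, j} T"]
      show ?thesis unfolding eq by (auto simp: insert_commute)
    next
      case False
      have eq: "{k \<in> insert j I. v \<in> ?\<beta> k} = {k \<in> I. v \<in> \<beta> k}" using False bI j by auto
      show ?thesis unfolding eq by (rule connected_in_mono[OF con[rule_format, OF True]]) auto
    qed
  next
    case False
    have eq: "{k \<in> insert j I. v \<in> ?\<beta> k} = {j}" using False v bI bW by auto
    show ?thesis unfolding eq by (rule connected_in_single)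
  qed
  show ?thesis unfolding tree_decomposition_def
  proof (intro conjI)
    show "tree (insert j I) (insert {i, j} T)" by (rule tree_add_leaf[OF T i j])
    show "\<forall>k\<in>insert j I. ?\<beta> k \<subseteq> W \<union> B" using bW bI by auto
    show "\<forall>v\<in>W \<union> B. \<exists>k\<in>insert j I. v \<in> ?\<beta> k" using cov bI by fastforce
    show "\<forall>e\<in>F'. \<exists>k\<in>insert j I. e \<subseteq> ?\<beta> k" using ecov bI F' by fastforce
    show "\<forall>v\<in>W \<union> B. connected_in (insert {i, j} T) {k \<in> insert j I. v \<in> ?\<beta> k}"
      using con' by blast
  qed
qed

lemma ins_nth:
  assumes "s < length Cs" "j < Suc (length Cs)"
  shows "(take (Suc s) Cs @ B # drop (Suc s) Cs) ! j =
    (if j \<le> s then Cs ! j else if j = Suc s then B else Cs ! (j - 1))"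
  using assms apply (auto simp: nth_append min_def nth_Cons' not_le)
  apply (subgoal_tac "Suc (j - 2) = j - Suc 0")
   apply simp
  apply arith
  done

lemma pd_insert:
  assumes pd: "path_decomposition W F Cs" and s: "s < length Cs"
    and Bs: "B \<inter> W \<subseteq> Cs ! s" and Bs2: "Suc s < length Cs \<Longrightarrow> Cs ! s \<inter> Cs ! Suc s \<subseteq> B"
    and F': "\<forall>f\<in>F'. f \<in> F \<or> f \<subseteq> B"
  defines "D \<equiv> take (Suc s) Cs @ B # drop (Suc s) Cs"
  shows "path_decomposition (W \<union> B) F' D"
proof -
  have ne: "Cs \<noteq> []" and bW: "\<forall>C\<in>set Cs. C \<subseteq> W" and cov: "\<forall>v\<in>W. \<exists>C\<in>set Cs. v \<in> C"
    and ecov: "\<forall>e\<in>F. \<exists>C\<in>set Cs. e \<subseteq> C"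
    and ri: "\<And>i j k. i \<le> j \<Longrightarrow> j \<le> k \<Longrightarrow> k < length Cs \<Longrightarrow> Cs ! i \<inter> Cs ! k \<subseteq> Cs ! j"
    using pd unfolding path_decomposition_def by auto
  have setD: "set D = insert B (set Cs)" unfolding D_def
    by (metis append_take_drop_id insert_commute list.simps(15) set_append Un_insert_right)
  have lenD: "length D = Suc (length Cs)" unfolding D_def using s by simp
  have nth: "D ! j = (if j \<le> s then Cs ! j else if j = Suc s then B else Cs ! (j - 1))"
    if "j < length D" for j using ins_nth[OF s, of j B] that lenD unfolding D_def by simp
  have bWi: "Cs ! k \<subseteq> W" if "k < length Cs" for k using bW that by auto
  define g where "g x = (if x \<le> s then x else x - 1)" for x :: nat
  have gi: "D ! x = Cs ! g x" if "x < length D" "x \<noteq> Suc s" for x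
    using nth[OF that(1)] that(2) unfolding g_def by auto
  have gl: "g x < length Cs" if "x < length D" "x \<noteq> Suc s" for x
    using that s lenD unfolding g_def by auto
  have onlyB: "x = Suc s" if "x < length D" "v \<in> D ! x" "v \<notin> W" for x v
  proof (rule ccontr)
    assume "x \<noteq> Suc s"
    thus False using gi[of x] gl[of x] bWi[of "g x"] that by auto
  qed
  have ri': "D ! i \<inter> D ! k \<subseteq> D ! j" if ijk: "i \<le> j" "j \<le> k" "k < length D" for i j k
  proof
    fix v assume v: "v \<in> D ! i \<inter> D ! k"
    show "v \<in> D ! j"
    proof (cases "v \<in> W")
      case False
      have "i = Suc s" using v False ijk onlyB[of i v] by auto
      moreover have "k = Suc s" using v False ijk onlyB[of k v] by auto
      ultimately show ?thesis using v ijk by simp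
    next
      case True
      have vi: "v \<in> D ! i" and vk: "v \<in> D ! k" using v by auto
      show ?thesis
      proof (cases "j = Suc s")
        case jS: True
        show ?thesis
        proof (cases "i = Suc s \<or> k = Suc s")
          case True thus ?thesis using vi vk jS by auto
        next
          case False
          hence "i \<le> s" "k > Suc s" using ijk jS by auto
          hence a: "v \<in> Cs ! i" "v \<in> Cs ! (k - 1)" using vi vk nth[of i] nth[of k] ijk lenD by auto
          have "k - 1 < length Cs" using ijk lenD \<open>k > Suc s\<close> by auto
          moreover have "s \<le> k - 1" using \<open>k > Suc s\<close> by arith
          ultimately have "v \<in> Cs ! s" using ri[of i s "k - 1"] a \<open>i \<le> s\<close> by blast
          moreover have "v \<in> Cs ! Suc s"
          proof -
            have "Suc s \<le> k - 1" "k - 1 < length Cs" using \<open>k > Suc s\<close> ijk lenD by arith+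
            moreover have "i \<le> Suc s" using \<open>i \<le> s\<close> by simp
            ultimately show ?thesis using ri[of i "Suc s" "k - 1"] a by blast
          qed
          ultimately have "v \<in> B" using Bs2 \<open>k > Suc s\<close> ijk lenD by auto
          thus ?thesis using nth[of j] jS ijk by auto
        qed
      next
        case jS: False
        show ?thesis
        proof (cases "i = Suc s")
          case True
          hence "v \<in> Cs ! s" using vi nth[of i] ijk Bs \<open>v \<in> W\<close> by auto
          moreover have "j > Suc s" using True jS ijk by auto
          moreover have "v \<in> Cs ! (k - 1)" using vk nth[of k] ijk \<open>j > Suc s\<close> by auto
          moreover have "s \<le> j - 1" "j - 1 \<le> k - 1" "k - 1 < length Cs" using \<open>j > Suc s\<close> ijk lenD by arith+
          ultimately have "v \<in> Cs ! (j - 1)" using ri[of s "j - 1" "k - 1"] by blast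
          thus ?thesis using nth[of j] ijk \<open>j > Suc s\<close> by auto
        next
          case iS: False
          show ?thesis
          proof (cases "k = Suc s")
            case True
            hence "v \<in> Cs ! s" using vk nth[of k] ijk Bs \<open>v \<in> W\<close> by auto
            moreover have "j \<le> s" using True jS ijk by auto
            moreover have "v \<in> Cs ! i" using vi nth[of i] ijk \<open>j \<le> s\<close> by auto
            moreover have "i \<le> j" using ijk by simp
            ultimately have "v \<in> Cs ! j" using ri[of i j s] s by blast
            thus ?thesis using nth[of j] ijk \<open>j \<le> s\<close> by auto
          next
            case kS: False
            have "g i \<le> g j" "g j \<le> g k" "g k < length Cs"
              using ijk iS jS kS lenD s gl[of k] unfolding g_def by auto
            hence "Cs ! g i \<inter> Cs ! g k \<subseteq> Cs ! g j" by (intro ri)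
            thus ?thesis using vi vk gi[of i] gi[of j] gi[of k] ijk iS jS kS by auto
          qed
        qed
      qed
    qed
  qed
  show ?thesis unfolding path_decomposition_def
  proof (intro conjI allI impI)
    show "D \<noteq> []" using lenD by auto
    show "\<forall>C\<in>set D. C \<subseteq> W \<union> B" using setD bW by auto
    show "\<forall>v\<in>W \<union> B. \<exists>C\<in>set D. v \<in> C" using setD cov by auto
    show "\<forall>e\<in>F'. \<exists>C\<in>set D. e \<subseteq> C" using setD ecov F' by fastforce
    fix i j k assume "i \<le> j \<and> j \<le> k \<and> k < length D"
    thus "D ! i \<inter> D ! k \<subseteq> D ! j" using ri' by blast
  qed
qed




definition NE :: "'a set \<Rightarrow> 'a list \<Rightarrow> 'a set set" where
  "NE e p = {{p ! i, p ! Suc i} | i. Suc i < length p} \<union> {{x, v} | x v. x \<in> set p \<and> v \<in> e}"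

definition PE :: "'a set \<Rightarrow> 'a list \<Rightarrow> nat \<Rightarrow> 'a set set" where
  "PE e p n = {{p ! i, p ! Suc i} | i. Suc i < n} \<union> {{x, v} | x v. x \<in> set (take n p) \<and> v \<in> e}"

lemma PE_0: "PE e p 0 = {}" unfolding PE_def by auto

lemma PE_len: "PE e p (length p) = NE e p" unfolding PE_def NE_def by simp

lemma take_Suc_set: "n < length p \<Longrightarrow> set (take (Suc n) p) = insert (p ! n) (set (take n p))"
  by (simp add: take_Suc_conv_app_nth)

lemma nth_notin_take: "distinct p \<Longrightarrow> n < length p \<Longrightarrow> p ! n \<notin> set (take n p)"
  by (auto simp: in_set_conv_nth nth_eq_iff_index_eq)

lemma prev_in_take: "0 < n \<Longrightarrow> n \<le> length p \<Longrightarrow> p ! (n - 1) \<in> set (take n p)"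
  by (auto simp: in_set_conv_nth intro!: exI[of _ "n - 1"])

lemma PE_Suc:
  assumes "n < length p" "e \<subseteq> A" "f \<in> PE e p (Suc n)"
  shows "f \<in> PE e p n \<or> f \<subseteq> A \<union> {p ! n, p ! (n - 1)}"
proof -
  from assms(3) consider (a) i where "f = {p ! i, p ! Suc i}" "Suc i < Suc n"
    | (b) x v where "f = {x, v}" "x \<in> set (take (Suc n) p)" "v \<in> e"
    unfolding PE_def by blast
  thus ?thesis
  proof cases
    case a
    show ?thesis
    proof (cases "Suc i < n")
      case True thus ?thesis using a unfolding PE_def by blast
    next
      case False hence "i = n - 1" "n = Suc i" using a by auto
      thus ?thesis using a by auto
    qed
  next
    case b
    have "x = p ! n \<or> x \<in> set (take n p)" using b(2) take_Suc_set[OF assms(1)] by auto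
    thus ?thesis using b assms(2) unfolding PE_def by blast
  qed
qed

lemma card_bag: "finite A \<Longrightarrow> card (A \<union> {x, y}) \<le> card A + 2"
proof -
  have "card {x, y} \<le> 2" by (simp add: card_insert_if)
  thus ?thesis using card_Un_le[of A "{x, y}"] by linarith
qed




lemma card_bag2: "card (A \<union> {x, y}) \<le> card A + 2"
proof (cases "finite A")
  case True thus ?thesis by (rule card_bag)
next
  case False thus ?thesis by simp
qed

lemma td_path:
  assumes td: "tree_decomposition W F I T \<beta>" and bnd: "\<forall>i\<in>I. int (card (\<beta> i)) - 1 \<le> K" and K3: "3 \<le> K"
    and eW: "e \<subseteq> W" and ce: "card e \<le> 2" and ie: "\<exists>i\<in>I. e \<subseteq> \<beta> i"
    and dp: "distinct p" and pW: "set p \<inter> W = {}"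
  shows "\<exists>I' T' \<beta>'. tree_decomposition (W \<union> set p) (F \<union> NE e p) I' T' \<beta>' \<and> (\<forall>i\<in>I'. int (card (\<beta>' i)) - 1 \<le> K)"
proof -
  have main: "n \<le> length p \<Longrightarrow> \<exists>I' T' \<beta>'. tree_decomposition (W \<union> set (take n p)) (F \<union> PE e p n) I' T' \<beta>'
      \<and> (\<forall>i\<in>I'. int (card (\<beta>' i)) - 1 \<le> K) \<and> (\<exists>j\<in>I'. e \<union> (if n = 0 then {} else {p ! (n - 1)}) \<subseteq> \<beta>' j)" for n
  proof (induction n)
    case 0 thus ?case using td bnd ie by (auto simp: PE_0)
  next
    case (Suc n)
    hence n: "n < length p" by simp
    then obtain I' T' \<beta>' j where td': "tree_decomposition (W \<union> set (take n p)) (F \<union> PE e p n) I' T' \<beta>'"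
      and b': "\<forall>i\<in>I'. int (card (\<beta>' i)) - 1 \<le> K" and j: "j \<in> I'"
      and ej: "e \<union> (if n = 0 then {} else {p ! (n - 1)}) \<subseteq> \<beta>' j" using Suc.IH by auto
    have "finite I'" using td' unfolding tree_decomposition_def tree_def graph_def by auto
    then obtain j' where j': "j' \<notin> I'" using ex_new_if_finite[OF infinite_UNIV_nat] by blast
    define B where "B = e \<union> {p ! n, p ! (n - 1)}"
    have "p ! n \<in> set p" using n by simp
    hence pn: "p ! n \<notin> W \<union> set (take n p)" using pW nth_notin_take[OF dp n] by auto
    have BW: "B \<inter> (W \<union> set (take n p)) \<subseteq> \<beta>' j"
    proof
      fix x assume x: "x \<in> B \<inter> (W \<union> set (take n p))"
      show "x \<in> \<beta>' j"
      proof (cases "n = 0")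
        case True thus ?thesis using x pn ej unfolding B_def by auto
      next
        case False thus ?thesis using x pn ej unfolding B_def by auto
      qed
    qed
    have F': "\<forall>f\<in>F \<union> PE e p (Suc n). f \<in> F \<union> PE e p n \<or> f \<subseteq> B"
      using PE_Suc[OF n order_refl] unfolding B_def by blast
    have td'': "tree_decomposition (W \<union> set (take n p) \<union> B) (F \<union> PE e p (Suc n)) (insert j' I') (insert {j, j'} T') (\<beta>'(j' := B))"
      by (rule td_leaf[OF td' j j' BW F'])
    have Weq: "W \<union> set (take n p) \<union> B = W \<union> set (take (Suc n) p)"
      using take_Suc_set[OF n] eW prev_in_take[of n p] n unfolding B_def by (cases "n = 0") auto
    have "card B \<le> card e + 2" unfolding B_def by (rule card_bag2)
    hence cB: "int (card B) - 1 \<le> K" using ce K3 by linarith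
    show ?case
    proof (intro exI conjI)
      show "tree_decomposition (W \<union> set (take (Suc n) p)) (F \<union> PE e p (Suc n)) (insert j' I') (insert {j, j'} T') (\<beta>'(j' := B))"
        using td'' Weq by simp
      show "\<forall>i\<in>insert j' I'. int (card ((\<beta>'(j' := B)) i)) - 1 \<le> K" using b' cB j' by auto
      show "\<exists>i\<in>insert j' I'. e \<union> (if Suc n = 0 then {} else {p ! (Suc n - 1)}) \<subseteq> (\<beta>'(j' := B)) i"
        by (rule bexI[of _ j']) (auto simp: B_def)
    qed
  qed
  from main[of "length p"] show ?thesis by (simp add: PE_len, blast)
qed

lemma pd_path:
  assumes pd: "path_decomposition W F Bs" and bnd: "\<forall>B\<in>set Bs. int (card B) - 1 \<le> K + 2"
    and A: "A \<in> set Bs" and eA: "e \<subseteq> A" and cA: "int (card A) - 1 \<le> K"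
    and dp: "distinct p" and pW: "set p \<inter> W = {}"
  shows "\<exists>Bs'. path_decomposition (W \<union> set p) (F \<union> NE e p) Bs' \<and> (\<forall>B\<in>set Bs'. int (card B) - 1 \<le> K + 2)
     \<and> set Bs \<subseteq> set Bs'"
proof -
  have AW: "A \<subseteq> W" using pd A unfolding path_decomposition_def by auto
  have main: "n \<le> length p \<Longrightarrow> \<exists>Cs s. path_decomposition (W \<union> set (take n p)) (F \<union> PE e p n) Cs
      \<and> (\<forall>B\<in>set Cs. int (card B) - 1 \<le> K + 2) \<and> set Bs \<subseteq> set Cs \<and> s < length Cs
      \<and> A \<union> (if n = 0 then {} else {p ! (n - 1)}) \<subseteq> Cs ! s \<and> Cs ! s \<subseteq> A \<union> set p
      \<and> (Suc s < length Cs \<longrightarrow> Cs ! Suc s \<subseteq> W)" for n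
  proof (induction n)
    case 0
    obtain s where s: "s < length Bs" "Bs ! s = A" using A by (auto simp: in_set_conv_nth)
    have "Suc s < length Bs \<longrightarrow> Bs ! Suc s \<subseteq> W" using pd unfolding path_decomposition_def by auto
    thus ?case using pd bnd s by (auto simp: PE_0 intro!: exI[of _ Bs] exI[of _ s])
  next
    case (Suc n)
    hence n: "n < length p" by simp
    then obtain Cs s where pd': "path_decomposition (W \<union> set (take n p)) (F \<union> PE e p n) Cs"
      and b': "\<forall>B\<in>set Cs. int (card B) - 1 \<le> K + 2" and sub: "set Bs \<subseteq> set Cs" and s: "s < length Cs"
      and As: "A \<union> (if n = 0 then {} else {p ! (n - 1)}) \<subseteq> Cs ! s" and sA: "Cs ! s \<subseteq> A \<union> set p"
      and nxt: "Suc s < length Cs \<longrightarrow> Cs ! Suc s \<subseteq> W" using Suc.IH[OF less_imp_le[OF n]] by blast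
    define B where "B = A \<union> {p ! n, p ! (n - 1)}"
    have "p ! n \<in> set p" using n by simp
    hence pn: "p ! n \<notin> W \<union> set (take n p)" using pW nth_notin_take[OF dp n] by auto
    have BW: "B \<inter> (W \<union> set (take n p)) \<subseteq> Cs ! s"
    proof
      fix x assume x: "x \<in> B \<inter> (W \<union> set (take n p))"
      show "x \<in> Cs ! s"
      proof (cases "n = 0")
        case True thus ?thesis using x pn As unfolding B_def by auto
      next
        case False thus ?thesis using x pn As unfolding B_def by auto
      qed
    qed
    have B2: "Cs ! s \<inter> Cs ! Suc s \<subseteq> B" if "Suc s < length Cs"
      using nxt that sA pW unfolding B_def by auto
    have F': "\<forall>f\<in>F \<union> PE e p (Suc n). f \<in> F \<union> PE e p n \<or> f \<subseteq> B"
      using PE_Suc[OF n eA] unfolding B_def by blast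
    define D where "D = take (Suc s) Cs @ B # drop (Suc s) Cs"
    have pdD: "path_decomposition (W \<union> set (take n p) \<union> B) (F \<union> PE e p (Suc n)) D"
      unfolding D_def by (rule pd_insert[OF pd' s BW B2 F'])
    have Weq: "W \<union> set (take n p) \<union> B = W \<union> set (take (Suc n) p)"
      using take_Suc_set[OF n] AW prev_in_take[of n p] n unfolding B_def by (cases "n = 0") auto
    have lenD: "length D = Suc (length Cs)" unfolding D_def using s by simp
    have setD: "set D = insert B (set Cs)" unfolding D_def
      by (metis append_take_drop_id insert_commute list.simps(15) set_append Un_insert_right)
    have DS: "D ! Suc s = B" using ins_nth[OF s, of "Suc s" B] s unfolding D_def by simp
    have DSS: "D ! Suc (Suc s) = Cs ! Suc s" if "Suc (Suc s) < length D"
      using ins_nth[OF s, of "Suc (Suc s)" B] that lenD unfolding D_def by simp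
    have "card B \<le> card A + 2" unfolding B_def by (rule card_bag2)
    hence cB: "int (card B) - 1 \<le> K + 2" using cA by linarith
    have Bp: "B \<subseteq> A \<union> set p" unfolding B_def using n by auto
    show ?case
    proof (intro exI[of _ D] exI[of _ "Suc s"] conjI)
      show "path_decomposition (W \<union> set (take (Suc n) p)) (F \<union> PE e p (Suc n)) D" using pdD Weq by simp
      show "\<forall>B\<in>set D. int (card B) - 1 \<le> K + 2" using setD b' cB by auto
      show "set Bs \<subseteq> set D" using setD sub by auto
      show "Suc s < length D" using lenD s by simp
      show "A \<union> (if Suc n = 0 then {} else {p ! (Suc n - 1)}) \<subseteq> D ! Suc s" using DS unfolding B_def by auto
      show "D ! Suc s \<subseteq> A \<union> set p" using DS Bp by simp
      show "Suc (Suc s) < length D \<longrightarrow> D ! Suc (Suc s) \<subseteq> W" using DSS nxt lenD by auto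
    qed
  qed
  from main[of "length p"] show ?thesis by (auto simp: PE_len)
qed




lemma no_cycle_empty: "\<not> is_cycle {} xs"
proof
  assume "is_cycle {} xs"
  hence "length xs \<ge> 3" "\<forall>i < length xs. {xs ! i, xs ! ((i + 1) mod length xs)} \<in> ({} :: 'a set set)"
    unfolding is_cycle_def by auto
  thus False by (metis empty_iff less_le_trans numeral_3_eq_3 zero_less_Suc)
qed

lemma td_triv: "graph V E \<Longrightarrow> tree_decomposition V E {0} {} (\<lambda>_. V)"
  unfolding tree_decomposition_def tree_def using no_cycle_empty
  by (auto simp: graph_def connected_in_def)

lemma td_fin: "tree_decomposition V E I F \<beta> \<Longrightarrow> finite I \<and> I \<noteq> {}"
  unfolding tree_decomposition_def tree_def graph_def by auto

lemma td_width_ge: "tree_decomposition V E I F \<beta> \<Longrightarrow> -1 \<le> td_width I \<beta>"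
proof -
  assume td: "tree_decomposition V E I F \<beta>"
  then obtain i where i: "i \<in> I" using td_fin by blast
  have "int (card (\<beta> i)) - 1 \<le> td_width I \<beta>" unfolding td_width_def
    using td_fin[OF td] i by (intro Max_ge) auto
  thus ?thesis by linarith
qed

lemma td_width_le: "tree_decomposition V E I F \<beta> \<Longrightarrow> (\<forall>i\<in>I. int (card (\<beta> i)) - 1 \<le> K) \<Longrightarrow> td_width I \<beta> \<le> K"
proof -
  assume a: "tree_decomposition V E I F \<beta>" "\<forall>i\<in>I. int (card (\<beta> i)) - 1 \<le> K"
  show ?thesis unfolding td_width_def using td_fin[OF a(1)] a(2) by (subst Max_le_iff) auto
qed

lemma tw_props:
  assumes "graph V E"
  shows "(\<exists>I F \<beta>. tree_decomposition V E I F \<beta> \<and> td_width I \<beta> = treewidth V E)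
    \<and> (\<forall>I F \<beta>. tree_decomposition V E I F \<beta> \<longrightarrow> treewidth V E \<le> td_width I \<beta>)"
proof -
  let ?P = "\<lambda>k. \<exists>I F \<beta>. tree_decomposition V E I F \<beta> \<and> td_width I \<beta> = k"
  have "?P (td_width {0} (\<lambda>_. V))" using td_triv[OF assms] by blast
  from int_least[of ?P, OF this, of "-1"] td_width_ge
  show ?thesis unfolding treewidth_def by blast
qed

lemma tw_le:
  assumes "tree_decomposition V E I F \<beta>" shows "treewidth V E \<le> td_width I \<beta>"
proof -
  let ?P = "\<lambda>k. \<exists>I F \<beta>. tree_decomposition V E I F \<beta> \<and> td_width I \<beta> = k"
  have "?P (td_width I \<beta>)" using assms by blast
  from int_least[of ?P, OF this, of "-1"] td_width_ge assms
  show ?thesis unfolding treewidth_def by blast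
qed

lemma pd_triv: "graph V E \<Longrightarrow> path_decomposition V E [V]"
  unfolding path_decomposition_def graph_def by auto

lemma pd_width_ge: "path_decomposition V E Bs \<Longrightarrow> -1 \<le> pd_width Bs"
proof -
  assume pd: "path_decomposition V E Bs"
  then obtain B where B: "B \<in> set Bs" unfolding path_decomposition_def by (cases Bs) auto
  have "int (card B) - 1 \<le> pd_width Bs" unfolding pd_width_def using B by (intro Max_ge) auto
  thus ?thesis by linarith
qed

lemma pw_le:
  assumes "path_decomposition V E Bs" shows "pathwidth V E \<le> pd_width Bs"
proof -
  let ?P = "\<lambda>k. \<exists>Bs. path_decomposition V E Bs \<and> pd_width Bs = k"
  have "?P (pd_width Bs)" using assms by blast
  from int_least[of ?P, OF this, of "-1"] pd_width_ge assms
  show ?thesis unfolding pathwidth_def by blast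
qed

lemma pd_width_le: "path_decomposition V E Bs \<Longrightarrow> (\<forall>B\<in>set Bs. int (card B) - 1 \<le> K) \<Longrightarrow> pd_width Bs \<le> K"
  unfolding pd_width_def path_decomposition_def by (subst Max_le_iff) auto

lemma pw_props:
  assumes "graph V E"
  shows "(\<exists>Bs. path_decomposition V E Bs \<and> pd_width Bs = pathwidth V E)
    \<and> (\<forall>Bs. path_decomposition V E Bs \<longrightarrow> pathwidth V E \<le> pd_width Bs)"
proof -
  let ?P = "\<lambda>k. \<exists>Bs. path_decomposition V E Bs \<and> pd_width Bs = k"
  have "?P (pd_width [V])" using pd_triv[OF assms] by blast
  from int_least[of ?P, OF this, of "-1"] pd_width_ge
  show ?thesis unfolding pathwidth_def by blast
qed

lemma graph_edge: assumes "graph V E" "e \<in> E" shows "e \<subseteq> V" "card e \<le> 2"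
proof -
  obtain u v where "e = {u, v}" "u \<in> V" "v \<in> V" using assms unfolding graph_def by blast
  thus "e \<subseteq> V" "card e \<le> 2" by (auto simp: card_insert_if)
qed

theorem lemma4p6:
  fixes V V' :: "'a set" and E E' :: "'a set set"
  assumes "graph V E" and "distension V E V' E'"
  shows "treewidth V' E' \<le> max (treewidth V E) 3 \<and> pathwidth V' E' \<le> pathwidth V E + 2"
proof -
  obtain P :: "'a set \<Rightarrow> 'a list" where
    P1: "\<forall>e\<in>E. P e \<noteq> [] \<and> distinct (P e) \<and> set (P e) \<inter> V = {}" and
    P2: "\<forall>e\<in>E. \<forall>e'\<in>E. e \<noteq> e' \<longrightarrow> set (P e) \<inter> set (P e') = {}" and
    V': "V' = V \<union> (\<Union>e\<in>E. set (P e))" and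
    E'0: "E' = E \<union> (\<Union>e\<in>E. {{P e ! i, P e ! Suc i} | i. Suc i < length (P e)}
                    \<union> {{x, v} | x v. x \<in> set (P e) \<and> v \<in> e})"
    using assms(2) unfolding distension_def by blast
  have E': "E' = E \<union> (\<Union>e\<in>E. NE e (P e))" unfolding E'0 NE_def by simp
  have eV: "e \<subseteq> V" and ce: "card e \<le> 2" if "e \<in> E" for e
    using graph_edge[OF assms(1) that] by auto
  have finE: "finite E"
  proof -
    have "E \<subseteq> Pow V" using eV by auto
    moreover have "finite V" using assms(1) unfolding graph_def by simp
    ultimately show ?thesis by (meson finite_Pow_iff finite_subset)
  qed
  have disj: "set (P e) \<inter> (V \<union> (\<Union>e'\<in>S. set (P e'))) = {}" if "e \<in> E" "S \<subseteq> E" "e \<notin> S" for e S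
  proof (rule ccontr)
    assume "set (P e) \<inter> (V \<union> (\<Union>e'\<in>S. set (P e'))) \<noteq> {}"
    then obtain x where x: "x \<in> set (P e)" "x \<in> V \<or> (\<exists>e'\<in>S. x \<in> set (P e'))" by blast
    show False
    proof (cases "x \<in> V")
      case True thus False using x P1 that by blast
    next
      case False
      then obtain e' where "e' \<in> S" "x \<in> set (P e')" using x by blast
      moreover have "e' \<noteq> e" using \<open>e' \<in> S\<close> that by blast
      ultimately show False using x P2 that by blast
    qed
  qed
  have tw: "treewidth V' E' \<le> max (treewidth V E) 3"
  proof -
    let ?K = "max (treewidth V E) 3"
    obtain I F \<beta> where td: "tree_decomposition V E I F \<beta>" and w: "td_width I \<beta> = treewidth V E"
      using tw_props[OF assms(1)] by blast
    have b0: "\<forall>i\<in>I. int (card (\<beta> i)) - 1 \<le> ?K"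
    proof
      fix i assume "i \<in> I"
      hence "int (card (\<beta> i)) - 1 \<le> td_width I \<beta>" unfolding td_width_def
        using td_fin[OF td] by (intro Max_ge) auto
      thus "int (card (\<beta> i)) - 1 \<le> ?K" using w by linarith
    qed
    have "\<exists>I' T' \<beta>'. tree_decomposition (V \<union> (\<Union>e\<in>S. set (P e))) (E \<union> (\<Union>e\<in>S. NE e (P e))) I' T' \<beta>'
       \<and> (\<forall>i\<in>I'. int (card (\<beta>' i)) - 1 \<le> ?K)" if "finite S" "S \<subseteq> E" for S
      using that
    proof (induction S rule: finite_subset_induct')
      case empty thus ?case using td b0 by auto
    next
      case (insert e S)
      then obtain I' T' \<beta>' where td': "tree_decomposition (V \<union> (\<Union>e\<in>S. set (P e))) (E \<union> (\<Union>e\<in>S. NE e (P e))) I' T' \<beta>'"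
        and b': "\<forall>i\<in>I'. int (card (\<beta>' i)) - 1 \<le> ?K" by blast
      have "\<exists>i\<in>I'. e \<subseteq> \<beta>' i" using td' insert(2) unfolding tree_decomposition_def by blast
      have K3: "3 \<le> ?K" by simp
      have eW: "e \<subseteq> V \<union> (\<Union>e\<in>S. set (P e))" using eV[OF insert(2)] by blast
      have dp: "distinct (P e)" using P1 insert(2) by blast
      note pW = disj[OF insert(2) insert(3) insert(4)]
      from td_path[OF td' b' K3 eW ce[OF insert(2)] \<open>\<exists>i\<in>I'. e \<subseteq> \<beta>' i\<close> dp pW]
      obtain I'' T'' \<beta>'' where
        "tree_decomposition (V \<union> (\<Union>e\<in>S. set (P e)) \<union> set (P e)) (E \<union> (\<Union>e\<in>S. NE e (P e)) \<union> NE e (P e)) I'' T'' \<beta>''"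
        "\<forall>i\<in>I''. int (card (\<beta>'' i)) - 1 \<le> ?K" by blast
      moreover have "V \<union> (\<Union>e\<in>S. set (P e)) \<union> set (P e) = V \<union> (\<Union>e\<in>insert e S. set (P e))" by auto
      moreover have "E \<union> (\<Union>e\<in>S. NE e (P e)) \<union> NE e (P e) = E \<union> (\<Union>e\<in>insert e S. NE e (P e))" by auto
      ultimately show ?case by auto
    qed
    from this[OF finE order_refl] obtain I' T' \<beta>' where
      "tree_decomposition V' E' I' T' \<beta>'" "\<forall>i\<in>I'. int (card (\<beta>' i)) - 1 \<le> ?K"
      unfolding V' E' by blast
    thus ?thesis using tw_le td_width_le by (meson order_trans)
  qed
  have pw: "pathwidth V' E' \<le> pathwidth V E + 2"
  proof -
    let ?K = "pathwidth V E"
    obtain Bs where pd: "path_decomposition V E Bs" and w: "pd_width Bs = ?K"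
      using pw_props[OF assms(1)] by blast
    have b0: "\<forall>B\<in>set Bs. int (card B) - 1 \<le> ?K"
    proof
      fix B assume "B \<in> set Bs"
      hence "int (card B) - 1 \<le> pd_width Bs" unfolding pd_width_def by (intro Max_ge) auto
      thus "int (card B) - 1 \<le> ?K" using w by linarith
    qed
    have cov0: "\<forall>e\<in>E. \<exists>A\<in>set Bs. e \<subseteq> A \<and> int (card A) - 1 \<le> ?K"
    proof -
      have "\<forall>e\<in>E. \<exists>B\<in>set Bs. e \<subseteq> B" using pd by (simp add: path_decomposition_def)
      thus ?thesis using b0 by blast
    qed
    have "\<exists>Bs'. path_decomposition (V \<union> (\<Union>e\<in>S. set (P e))) (E \<union> (\<Union>e\<in>S. NE e (P e))) Bs'
       \<and> (\<forall>B\<in>set Bs'. int (card B) - 1 \<le> ?K + 2) \<and> (\<forall>e\<in>E. \<exists>A\<in>set Bs'. e \<subseteq> A \<and> int (card A) - 1 \<le> ?K)"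
      if "finite S" "S \<subseteq> E" for S
      using that
    proof (induction S rule: finite_subset_induct')
      case empty
      have "\<forall>B\<in>set Bs. int (card B) - 1 \<le> ?K + 2" using b0 by fastforce
      thus ?case using pd cov0 by (intro exI[of _ Bs]) simp
    next
      case (insert e S)
      then obtain Bs' where pd': "path_decomposition (V \<union> (\<Union>e\<in>S. set (P e))) (E \<union> (\<Union>e\<in>S. NE e (P e))) Bs'"
        and b': "\<forall>B\<in>set Bs'. int (card B) - 1 \<le> ?K + 2"
        and c': "\<forall>e\<in>E. \<exists>A\<in>set Bs'. e \<subseteq> A \<and> int (card A) - 1 \<le> ?K" by blast
      obtain A where A: "A \<in> set Bs'" "e \<subseteq> A" "int (card A) - 1 \<le> ?K" using c' insert(2) by blast
      have dp: "distinct (P e)" using P1 insert(2) by blast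
      note pW = disj[OF insert(2) insert(3) insert(4)]
      from pd_path[OF pd' b' A dp pW]
      obtain Bs'' where
        "path_decomposition (V \<union> (\<Union>e\<in>S. set (P e)) \<union> set (P e)) (E \<union> (\<Union>e\<in>S. NE e (P e)) \<union> NE e (P e)) Bs''"
        "\<forall>B\<in>set Bs''. int (card B) - 1 \<le> ?K + 2" "set Bs' \<subseteq> set Bs''" by blast
      moreover have "V \<union> (\<Union>e\<in>S. set (P e)) \<union> set (P e) = V \<union> (\<Union>e\<in>insert e S. set (P e))" by auto
      moreover have "E \<union> (\<Union>e\<in>S. NE e (P e)) \<union> NE e (P e) = E \<union> (\<Union>e\<in>insert e S. NE e (P e))" by auto
      moreover have "\<forall>e\<in>E. \<exists>A\<in>set Bs''. e \<subseteq> A \<and> int (card A) - 1 \<le> ?K"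
        using c' \<open>set Bs' \<subseteq> set Bs''\<close> by blast
      ultimately show ?case by auto
    qed
    from this[OF finE order_refl] obtain Bs' where
      "path_decomposition V' E' Bs'" "\<forall>B\<in>set Bs'. int (card B) - 1 \<le> ?K + 2"
      unfolding V' E' by blast
    thus ?thesis using pw_le pd_width_le by (meson order_trans)
  qed
  show ?thesis using tw pw by simp
qed


end
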